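(* For every integer $k\ge 2$, the $k$-equal-representation shortlisting rule is non-wasteful. For every integer $k\ge 1$, the $k$-equal-representation shortlisting rule is representatively efficient.
   Context: Let $\mathbb{P}=\{p_1,\dots,p_m\}$ be a finite set of projects, $c:\mathbb{P}\to\mathbb{N}$ a cost function with $c(P)=\sum_{p\in P}c(p)$, and $B\in\mathbb{N}$ a budget limit with $c(p)\le B$ for all $p$. A shortlisting instance is $I=\langle\mathbb{P},c,B\rangle$. The agents are $\mathcal{N}=\{1,\dots,n\}$; a shortlisting profile is $\boldsymbol{P}=(P_1,\dots,P_n)$ with $P_i\subseteq\mathbb{P}$, and $\bigcup\boldsymbol{P}=P_1\cup\dots\cup P_n$. A shortlisting rule $R$ maps each $(I,\boldsymbol{P})$ to $R(I,\boldsymbol{P})\subseteq\bigcup\boldsymbol{P}$. Tie-breaking: for a nonempty family $\mathfrak{P}$ of subsets of $\mathbb{P}$, $T(\mathfrak{P})$ is the unique $P\in\mathfrak{P}$ such that for every $P'\in\mathfrak{P}\setminus\{P\}$ the lowest-index project of $(P\setminus P')\cup(P'\setminus P)$ belongs to $P$. The $k$-equal-representation shortlisting rule returns $$R(I,\boldsymbol{P})=T\Big(\operatorname*{argmax}_{P\subseteq\bigcup\boldsymbol{P},\ c(P)\le kB}\ \sum_{i\in\mathcal{N}}\sum_{\ell=0}^{|P_i\cap P|}\frac{1}{n^{\ell}}\Big).$$ $R$ is non-wasteful if for every $I$ and $\boldsymbol{P}$, either $c(R(I,\boldsymbol{P}))\ge B$ or $R(I,\boldsymbol{P})=\bigcup\boldsymbol{P}$.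 A set $\mathcal{P}\subseteq\mathbb{P}$ is representatively dominated (for $I,\boldsymbol{P}$) if there is $\mathcal{P}'\subseteq\mathbb{P}$ with $c(\mathcal{P}')\le c(\mathcal{P})$ and $|\mathcal{P}'\cap P_i|\ge|\mathcal{P}\cap P_i|$ for all $i$, strictly for at least one $i$; $R$ is representatively efficient if its output is never representatively dominated. *)

theory Defs
  imports Complex_Main
begin

text \<open>Projects are natural numbers; the index of project p is p itself, so the
  "lowest-index project" of a finite set is its minimum.\<close>

definition valid_instance :: "nat set \<Rightarrow> (nat \<Rightarrow> nat) \<Rightarrow> nat \<Rightarrow> bool" where
  "valid_instance PP c B \<longleftrightarrow> finite PP \<and> (\<forall>p\<in>PP. c p \<le> B)"

definition valid_profile :: "nat set \<Rightarrow> nat \<Rightarrow> (nat \<Rightarrow> nat set) \<Rightarrow> bool" where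
  "valid_profile PP n Ps \<longleftrightarrow> (\<forall>i\<in>{1..n}. Ps i \<subseteq> PP)"

definition union_profile :: "nat \<Rightarrow> (nat \<Rightarrow> nat set) \<Rightarrow> nat set" where
  "union_profile n Ps = (\<Union>i\<in>{1..n}. Ps i)"

definition tiebreak :: "nat set set \<Rightarrow> nat set" where
  "tiebreak F = (THE P. P \<in> F \<and> (\<forall>P'\<in>F - {P}. Min ((P - P') \<union> (P' - P)) \<in> P))"

definition keq_score :: "nat \<Rightarrow> (nat \<Rightarrow> nat set) \<Rightarrow> nat set \<Rightarrow> real" where
  "keq_score n Ps P = (\<Sum>i\<in>{1..n}. \<Sum>l\<in>{0..card (Ps i \<inter> P)}. 1 / (real n) ^ l)"

type_synonym sl_rule = "nat set \<Rightarrow> (nat \<Rightarrow> nat) \<Rightarrow> nat \<Rightarrow> nat \<Rightarrow> (nat \<Rightarrow> nat set) \<Rightarrow> nat set"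

definition keq_rule :: "nat \<Rightarrow> sl_rule" where
  "keq_rule k PP c B n Ps = tiebreak
     {P. P \<subseteq> union_profile n Ps \<and> sum c P \<le> k * B \<and>
         (\<forall>Q. Q \<subseteq> union_profile n Ps \<and> sum c Q \<le> k * B \<longrightarrow>
              keq_score n Ps Q \<le> keq_score n Ps P)}"

definition non_wasteful :: "sl_rule \<Rightarrow> bool" where
  "non_wasteful R \<longleftrightarrow> (\<forall>PP c B n Ps. valid_instance PP c B \<and> valid_profile PP n Ps \<longrightarrow>
      sum c (R PP c B n Ps) \<ge> B \<or> R PP c B n Ps = union_profile n Ps)"

definition rep_dominated :: "nat set \<Rightarrow> (nat \<Rightarrow> nat) \<Rightarrow> nat \<Rightarrow> (nat \<Rightarrow> nat set) \<Rightarrow> nat set \<Rightarrow> bool" where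
  "rep_dominated PP c n Ps P \<longleftrightarrow> (\<exists>P'. P' \<subseteq> PP \<and> sum c P' \<le> sum c P \<and>
      (\<forall>i\<in>{1..n}. card (P' \<inter> Ps i) \<ge> card (P \<inter> Ps i)) \<and>
      (\<exists>i\<in>{1..n}. card (P' \<inter> Ps i) > card (P \<inter> Ps i)))"

definition rep_efficient :: "sl_rule \<Rightarrow> bool" where
  "rep_efficient R \<longleftrightarrow> (\<forall>PP c B n Ps. valid_instance PP c B \<and> valid_profile PP n Ps \<longrightarrow>
      \<not> rep_dominated PP c n Ps (R PP c B n Ps))"

end

theory Submission
  imports Defs
begin

definition beats :: "nat set \<Rightarrow> nat set \<Rightarrow> bool" where
  "beats A B \<longleftrightarrow> Min ((A - B) \<union> (B - A)) \<in> A"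

lemma Min_symdiff:
  assumes "finite A" "finite B" "A \<noteq> B"
  shows "Min ((A - B) \<union> (B - A)) \<in> (A - B) \<union> (B - A)"
    and "\<And>y. y < Min ((A - B) \<union> (B - A)) \<Longrightarrow> (y \<in> A \<longleftrightarrow> y \<in> B)"
proof -
  have ne: "(A - B) \<union> (B - A) \<noteq> {}" using assms by blast
  have f: "finite ((A - B) \<union> (B - A))" using assms by blast
  show "Min ((A - B) \<union> (B - A)) \<in> (A - B) \<union> (B - A)" using Min_in[OF f ne] .
  fix y assume "y < Min ((A - B) \<union> (B - A))"
  then show "y \<in> A \<longleftrightarrow> y \<in> B" using Min_le[OF f] by force
qed

lemma beats_trans:
  assumes fin: "finite A" "finite B" "finite C"
    and ab: "A \<noteq> B" "beats A B" and bc: "B \<noteq> C" "beats B C"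
  shows "A \<noteq> C \<and> beats A C"
proof -
  define a where "a = Min ((A - B) \<union> (B - A))"
  define b where "b = Min ((B - C) \<union> (C - B))"
  have a1: "a \<in> A" "a \<notin> B" using ab Min_symdiff(1)[OF fin(1,2) ab(1)] unfolding beats_def a_def by auto
  have a2: "\<And>y. y < a \<Longrightarrow> (y \<in> A \<longleftrightarrow> y \<in> B)" using Min_symdiff(2)[OF fin(1,2) ab(1)] a_def by blast
  have b1: "b \<in> B" "b \<notin> C" using bc Min_symdiff(1)[OF fin(2,3) bc(1)] unfolding beats_def b_def by auto
  have b2: "\<And>y. y < b \<Longrightarrow> (y \<in> B \<longleftrightarrow> y \<in> C)" using Min_symdiff(2)[OF fin(2,3) bc(1)] b_def by blast
  have "a \<noteq> b" using a1 b1 by auto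
  then consider "a < b" | "b < a" by linarith
  then obtain m where m: "m \<in> A" "m \<notin> C" "\<And>y. y < m \<Longrightarrow> (y \<in> A \<longleftrightarrow> y \<in> C)"
  proof cases
    case 1
    then show ?thesis using that[of a] a1 a2 b2 by (meson order.strict_trans)
  next
    case 2
    then show ?thesis using that[of b] b1 a2 b2 by (meson order.strict_trans)
  qed
  have f: "finite ((A - C) \<union> (C - A))" using fin by blast
  have "Min ((A - C) \<union> (C - A)) = m"
  proof (rule Min_eqI[OF f])
    fix y assume "y \<in> (A - C) \<union> (C - A)"
    then show "m \<le> y" using m(3) by (meson DiffD1 DiffD2 UnE not_le)
  qed (use m in auto)
  then show ?thesis using m unfolding beats_def by auto
qed

lemma beats_exists:
  assumes "finite F" "F \<noteq> {}" "\<forall>P\<in>F. finite P"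
  shows "\<exists>P\<in>F. \<forall>P'\<in>F - {P}. beats P P'"
  using assms
proof (induction F rule: finite_ne_induct)
  case (singleton x)
  then show ?case by auto
next
  case (insert Q F)
  then obtain P where P: "P \<in> F" "\<forall>P'\<in>F - {P}. beats P P'" by auto
  have fP: "finite P" "finite Q" using insert P by auto
  show ?case
  proof (cases "beats P Q")
    case True
    then show ?thesis using P by auto
  next
    case False
    have "P \<noteq> Q" using insert P by auto
    have bQ: "beats Q P"
      using False Min_symdiff(1)[OF fP \<open>P \<noteq> Q\<close>] unfolding beats_def by (auto simp: Un_commute)
    have "\<forall>P'\<in>insert Q F - {Q}. beats Q P'"
    proof
      fix P' assume P': "P' \<in> insert Q F - {Q}"
      show "beats Q P'"
      proof (cases "P' = P")
        case True then show ?thesis using bQ by simp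
      next
        case False
        then show ?thesis using beats_trans[of Q P P'] fP P P' insert.prems \<open>P \<noteq> Q\<close> bQ by auto
      qed
    qed
    then show ?thesis by auto
  qed
qed

lemma tiebreak_in:
  assumes "finite F" "F \<noteq> {}" "\<forall>P\<in>F. finite P"
  shows "tiebreak F \<in> F"
proof -
  obtain P where P: "P \<in> F" "\<forall>P'\<in>F - {P}. beats P P'" using beats_exists[OF assms] by blast
  have "\<And>Q. Q \<in> F \<and> (\<forall>P'\<in>F - {Q}. Min ((Q - P') \<union> (P' - Q)) \<in> Q) \<Longrightarrow> Q = P"
  proof (rule ccontr)
    fix Q assume Q: "Q \<in> F \<and> (\<forall>P'\<in>F - {Q}. Min ((Q - P') \<union> (P' - Q)) \<in> Q)" "Q \<noteq> P"
    have "Min ((Q - P) \<union> (P - Q)) \<in> Q" using Q P by auto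
    moreover have "Min ((P - Q) \<union> (Q - P)) \<in> P" using Q P unfolding beats_def by auto
    moreover have "Min ((P - Q) \<union> (Q - P)) \<in> (P - Q) \<union> (Q - P)"
      using Min_symdiff(1)[of P Q] Q P assms by auto
    ultimately show False by (auto simp: Un_commute)
  qed
  moreover have "P \<in> F \<and> (\<forall>P'\<in>F - {P}. Min ((P - P') \<union> (P' - P)) \<in> P)" using P unfolding beats_def by auto
  ultimately have "tiebreak F = P" unfolding tiebreak_def by (rule the_equality[rotated])
  then show ?thesis using P by simp
qed

lemma inner_strict_mono:
  assumes "n \<ge> 1"
  shows "strict_mono (\<lambda>m. \<Sum>l\<in>{0..m}. 1 / (real n) ^ l)"
unfolding strict_mono_Suc_iff
proof
  fix m
  have "(\<Sum>l\<in>{0..Suc m}. 1 / (real n) ^ l) = (\<Sum>l\<in>{0..m}. 1 / (real n) ^ l) + 1 / real n ^ Suc m"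
    by simp
  moreover have "1 / real n ^ Suc m > 0" using assms by simp
  ultimately show "(\<Sum>l\<in>{0..m}. 1 / (real n) ^ l) < (\<Sum>l\<in>{0..Suc m}. 1 / (real n) ^ l)" by linarith
qed

lemma score_strict:
  assumes le: "\<forall>i\<in>{1..n}. card (Ps i \<inter> P) \<le> card (Ps i \<inter> Q)"
    and lt: "\<exists>i\<in>{1..n}. card (Ps i \<inter> P) < card (Ps i \<inter> Q)"
  shows "keq_score n Ps P < keq_score n Ps Q"
proof -
  have n: "n \<ge> 1" using lt by auto
  note sm = inner_strict_mono[OF n]
  show ?thesis unfolding keq_score_def
  proof (rule sum_strict_mono_ex1)
    show "\<forall>x\<in>{1..n}. (\<Sum>l = 0..card (Ps x \<inter> P). 1 / real n ^ l) \<le> (\<Sum>l = 0..card (Ps x \<inter> Q). 1 / real n ^ l)"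
    proof
      fix x assume "x \<in> {1..n}"
      then have "card (Ps x \<inter> P) \<le> card (Ps x \<inter> Q)" using le by blast
      then show "(\<Sum>l = 0..card (Ps x \<inter> P). 1 / real n ^ l) \<le> (\<Sum>l = 0..card (Ps x \<inter> Q). 1 / real n ^ l)"
        using strict_mono_less_eq[OF sm] by blast
    qed
    show "\<exists>x\<in>{1..n}. (\<Sum>l = 0..card (Ps x \<inter> P). 1 / real n ^ l) < (\<Sum>l = 0..card (Ps x \<inter> Q). 1 / real n ^ l)"
      using lt strict_mono_less[OF sm] by blast
  qed simp
qed

lemma rule_in:
  assumes "valid_instance PP c B" "valid_profile PP n Ps"
  defines "U \<equiv> union_profile n Ps"
  shows "keq_rule k PP c B n Ps \<subseteq> U \<and> sum c (keq_rule k PP c B n Ps) \<le> k * B \<and>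
         (\<forall>Q. Q \<subseteq> U \<and> sum c Q \<le> k * B \<longrightarrow>
              keq_score n Ps Q \<le> keq_score n Ps (keq_rule k PP c B n Ps))"
proof -
  have fU: "finite U" using assms unfolding U_def union_profile_def valid_instance_def valid_profile_def
    by (meson UN_least finite_subset)
  define S where "S = {P. P \<subseteq> U \<and> sum c P \<le> k * B}"
  have fS: "finite S" using fU unfolding S_def by auto
  have "{} \<in> S" unfolding S_def by auto
  then have neS: "S \<noteq> {}" by auto
  obtain P where P: "P \<in> S" "\<forall>Q\<in>S. keq_score n Ps Q \<le> keq_score n Ps P"
  proof -
    let ?M = "Max (keq_score n Ps ` S)"
    have "?M \<in> keq_score n Ps ` S" using fS neS by simp
    then obtain P where "P \<in> S" "keq_score n Ps P = ?M" by auto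
    moreover have "\<forall>Q\<in>S. keq_score n Ps Q \<le> ?M" using fS by simp
    ultimately show ?thesis using that by metis
  qed
  define F where "F = {P. P \<subseteq> U \<and> sum c P \<le> k * B \<and>
         (\<forall>Q. Q \<subseteq> U \<and> sum c Q \<le> k * B \<longrightarrow> keq_score n Ps Q \<le> keq_score n Ps P)}"
  have "P \<in> F" using P unfolding F_def S_def by auto
  moreover have "F \<subseteq> Pow U" unfolding F_def by auto
  moreover have "\<forall>P\<in>F. finite P" unfolding F_def using fU finite_subset by auto
  ultimately have "tiebreak F \<in> F" using tiebreak_in[of F] fU
    by (metis empty_iff finite_Pow_iff finite_subset)
  moreover have "keq_rule k PP c B n Ps = tiebreak F" unfolding keq_rule_def F_def U_def by simp
  ultimately show ?thesis unfolding F_def by simp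
qed

theorem proposition2:
  shows "(\<forall>k::nat. k \<ge> 2 \<longrightarrow> non_wasteful (keq_rule k)) \<and>
         (\<forall>k::nat. k \<ge> 1 \<longrightarrow> rep_efficient (keq_rule k))"
proof safe
  fix k :: nat assume k: "k \<ge> 2"
  show "non_wasteful (keq_rule k)"
    unfolding non_wasteful_def
  proof (intro allI impI)
    fix PP c B n Ps assume a: "valid_instance PP c B \<and> valid_profile PP n Ps"
    let ?R = "keq_rule k PP c B n Ps"
    let ?U = "union_profile n Ps"
    have R: "?R \<subseteq> ?U" "sum c ?R \<le> k * B"
      "\<forall>Q. Q \<subseteq> ?U \<and> sum c Q \<le> k * B \<longrightarrow> keq_score n Ps Q \<le> keq_score n Ps ?R"
      using rule_in[of PP c B n Ps k] a by auto
    have fU: "finite ?U" using a unfolding union_profile_def valid_instance_def valid_profile_def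
      by (meson UN_least finite_subset)
    show "B \<le> sum c ?R \<or> ?R = ?U"
    proof (rule ccontr)
      assume "\<not> (B \<le> sum c ?R \<or> ?R = ?U)"
      then have lt: "sum c ?R < B" and ne: "?R \<noteq> ?U" by auto
      then obtain p where p: "p \<in> ?U" "p \<notin> ?R" using R by blast
      then obtain i where i: "i \<in> {1..n}" "p \<in> Ps i" unfolding union_profile_def by auto
      have "p \<in> PP" using a i unfolding valid_profile_def by auto
      then have cp: "c p \<le> B" using a unfolding valid_instance_def by auto
      have fR: "finite ?R" using R fU finite_subset by auto
      have "sum c (insert p ?R) = c p + sum c ?R" using fR p by simp
      also have "\<dots> \<le> k * B" using cp lt k
        by (metis add_le_mono less_or_eq_imp_le mult_2 mult_le_mono1 order.trans)
      finally have c2: "sum c (insert p ?R) \<le> k * B" .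
      have sub: "insert p ?R \<subseteq> ?U" using R p by auto
      have "\<forall>j\<in>{1..n}. card (Ps j \<inter> ?R) \<le> card (Ps j \<inter> insert p ?R)"
        using fR by (intro ballI card_mono) auto
      moreover have "card (Ps i \<inter> ?R) < card (Ps i \<inter> insert p ?R)"
        using fR i p by (intro psubset_card_mono) auto
      ultimately have "keq_score n Ps ?R < keq_score n Ps (insert p ?R)"
        using i by (intro score_strict) blast+
      moreover have "keq_score n Ps (insert p ?R) \<le> keq_score n Ps ?R" using R(3) sub c2 by blast
      ultimately show False by linarith
    qed
  qed
next
  fix k :: nat assume k: "k \<ge> 1"
  show "rep_efficient (keq_rule k)"
    unfolding rep_efficient_def
  proof (intro allI impI notI)
    fix PP c B n Ps assume a: "valid_instance PP c B \<and> valid_profile PP n Ps"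
      and d: "rep_dominated PP c n Ps (keq_rule k PP c B n Ps)"
    let ?R = "keq_rule k PP c B n Ps"
    let ?U = "union_profile n Ps"
    have R: "?R \<subseteq> ?U" "sum c ?R \<le> k * B"
      "\<forall>Q. Q \<subseteq> ?U \<and> sum c Q \<le> k * B \<longrightarrow> keq_score n Ps Q \<le> keq_score n Ps ?R"
      using rule_in[of PP c B n Ps k] a by auto
    obtain P' where P': "P' \<subseteq> PP" "sum c P' \<le> sum c ?R"
      "\<forall>i\<in>{1..n}. card (P' \<inter> Ps i) \<ge> card (?R \<inter> Ps i)"
      "\<exists>i\<in>{1..n}. card (P' \<inter> Ps i) > card (?R \<inter> Ps i)"
      using d unfolding rep_dominated_def by blast
    have fPP: "finite PP" using a unfolding valid_instance_def by auto
    define Q where "Q = P' \<inter> ?U"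
    have eq: "\<And>i. i \<in> {1..n} \<Longrightarrow> Ps i \<inter> Q = P' \<inter> Ps i"
      unfolding Q_def union_profile_def by auto
    have "sum c Q \<le> sum c P'" unfolding Q_def
      using fPP P'(1) by (intro sum_mono2) (auto intro: finite_subset)
    then have cQ: "sum c Q \<le> k * B" using P'(2) R(2) by linarith
    have "keq_score n Ps ?R < keq_score n Ps Q"
      using P'(3,4) eq by (intro score_strict) (auto simp: Int_commute)
    moreover have "keq_score n Ps Q \<le> keq_score n Ps ?R" using R(3) cQ unfolding Q_def by blast
    ultimately show False by linarith
  qed
qed

end
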